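(* Let $p$ be a prime, $\mathbb{F}=\mathbb{F}_p$, let $m>k\ge1$ and $s\ge1$ be integers, and let $S$ be a collection (possibly with repetitions) of $k$-dimensional linear subspaces of $\mathbb{F}^m$. If $|S|\ge s^{k+1}p^{\frac{k^2+k-2}{2}}$, then $S$ contains a sunflower of size at least $s$.
   Context: A collection $V_1,\dots,V_s$ of (possibly repeated) subspaces of $\mathbb{F}^m$ is a sunflower if, with $C=\bigcap_{j}V_j$, one has $V_i\cap V_{i'}=C$ for all $i\ne i'$. *)

theory Defs
  imports "HOL-Analysis.Cartesian_Space" "HOL-Computational_Algebra.Primes"
begin

text \<open>A finite family of subspaces, indexed by J (repetitions allowed: distinct indices may
carry equal subspaces), is a sunflower if any two members (with distinct indices) intersect
exactly in the common intersection of the whole family.\<close>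
definition sunflower :: "'i set \<Rightarrow> ('i \<Rightarrow> 'v set) \<Rightarrow> bool" where
  "sunflower J V \<longleftrightarrow>
     (\<forall>i\<in>J. \<forall>i'\<in>J. i \<noteq> i' \<longrightarrow> V i \<inter> V i' = (\<Inter>j\<in>J. V j))"

end

theory Submission
  imports Defs
begin

lemma card_span_le:
  fixes B :: "('f::field ^ 'm) set"
  assumes fin: "finite (UNIV :: 'f set)" and fB: "finite B"
  shows "card (vec.span B) \<le> CARD('f) ^ card B"
proof -
  let ?g = "\<lambda>u. \<Sum>v\<in>B. u v *s v"
  have "range ?g \<subseteq> ?g ` (B \<rightarrow>\<^sub>E (UNIV :: 'f set))"
  proof
    fix x assume "x \<in> range ?g"
    then obtain u where x: "x = ?g u" by auto
    have "?g (restrict u B) = ?g u" by (rule sum.cong) auto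
    moreover have "restrict u B \<in> B \<rightarrow>\<^sub>E UNIV" by simp
    ultimately show "x \<in> ?g ` (B \<rightarrow>\<^sub>E UNIV)" using x by (intro image_eqI[where x="restrict u B"]) simp_all
  qed
  then have "vec.span B \<subseteq> ?g ` (B \<rightarrow>\<^sub>E (UNIV :: 'f set))"
    using vec.span_finite[OF fB] by simp
  moreover have finP: "finite (B \<rightarrow>\<^sub>E (UNIV :: 'f set))"
    by (rule finite_PiE[OF fB]) (simp add: fin)
  ultimately have "card (vec.span B) \<le> card (?g ` (B \<rightarrow>\<^sub>E (UNIV :: 'f set)))"
    by (intro card_mono finite_imageI)
  also have "\<dots> \<le> card (B \<rightarrow>\<^sub>E (UNIV :: 'f set))"
    by (rule card_image_le[OF finP])
  also have "\<dots> = CARD('f) ^ card B" using fB by (simp add: card_PiE)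
  finally show ?thesis .
qed

lemma finite_span_fin:
  fixes B :: "('f::field ^ 'm) set"
  assumes fin: "finite (UNIV :: 'f set)" and fB: "finite B"
  shows "finite (vec.span B)"
proof -
  let ?g = "\<lambda>u. \<Sum>v\<in>B. u v *s v"
  have "range ?g \<subseteq> ?g ` (B \<rightarrow>\<^sub>E (UNIV :: 'f set))"
  proof
    fix x assume "x \<in> range ?g"
    then obtain u where x: "x = ?g u" by auto
    have "?g (restrict u B) = ?g u" by (rule sum.cong) auto
    moreover have "restrict u B \<in> B \<rightarrow>\<^sub>E UNIV" by simp
    ultimately show "x \<in> ?g ` (B \<rightarrow>\<^sub>E UNIV)" using x by (intro image_eqI[where x="restrict u B"]) simp_all
  qed
  then have "vec.span B \<subseteq> ?g ` (B \<rightarrow>\<^sub>E (UNIV :: 'f set))"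
    using vec.span_finite[OF fB] by simp
  moreover have finP: "finite (B \<rightarrow>\<^sub>E (UNIV :: 'f set))"
    by (rule finite_PiE[OF fB]) (simp add: fin)
  ultimately show ?thesis using finite_subset finite_imageI by blast
qed

lemma pigeon:
  assumes "finite D" "L ` I \<subseteq> D" "card D * M \<le> card I" "I \<noteq> {}" "finite I"
  shows "\<exists>d\<in>D. M \<le> card {i\<in>I. L i = d}"
proof (rule ccontr)
  assume "\<not> ?thesis"
  then have lt: "\<And>d. d \<in> D \<Longrightarrow> card {i\<in>I. L i = d} < M" by force
  have "I = (\<Union>d\<in>D. {i\<in>I. L i = d})" using assms(2) by auto
  then have "card I \<le> (\<Sum>d\<in>D. card {i\<in>I. L i = d})" using card_UN_le[OF assms(1)] by metis
  also have "\<dots> < (\<Sum>d\<in>D. M)"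
    using assms(2,4) lt by (intro sum_strict_mono assms(1)) auto
  also have "\<dots> = card D * M" by simp
  finally show False using assms(3) by simp
qed

lemma max_family:
  fixes V :: "'i \<Rightarrow> ('f::field ^ 'm) set"
  assumes fI: "finite I" and hyp: "\<And>i. i\<in>I \<Longrightarrow> C \<subseteq> V i \<and> V i \<noteq> C"
  shows "(\<exists>J\<subseteq>I. card J \<ge> s \<and> sunflower J V) \<or>
         (\<exists>J\<subseteq>I. card J < s \<and> (\<forall>i\<in>I. \<exists>j\<in>J. \<not> V i \<inter> V j \<subseteq> C))"
proof -
  define F where "F = {J. J \<subseteq> I \<and> (\<forall>i\<in>J. \<forall>i'\<in>J. i \<noteq> i' \<longrightarrow> V i \<inter> V i' = C)}"
  have finF: "finite F" unfolding F_def using fI by (auto intro: finite_subset[of _ "Pow I"])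
  have "{} \<in> F" unfolding F_def by auto
  then have ne: "card ` F \<noteq> {}" by auto
  obtain J where JF: "J \<in> F" and Jmax: "\<And>J'. J' \<in> F \<Longrightarrow> card J' \<le> card J"
  proof -
    have "Max (card ` F) \<in> card ` F" using Max_in[OF _ ne] finF by auto
    then obtain J where "J \<in> F" "card J = Max (card ` F)" by auto
    moreover have "\<And>J'. J' \<in> F \<Longrightarrow> card J' \<le> Max (card ` F)" using finF by auto
    ultimately show ?thesis using that by metis
  qed
  have JI: "J \<subseteq> I" and Jp: "\<And>i i'. i\<in>J \<Longrightarrow> i'\<in>J \<Longrightarrow> i \<noteq> i' \<Longrightarrow> V i \<inter> V i' = C"
    using JF unfolding F_def by auto
  show ?thesis
  proof (cases "card J \<ge> s")
    case True
    have "sunflower J V" unfolding sunflower_def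
    proof (intro ballI impI)
      fix i i' assume a: "i \<in> J" "i' \<in> J" "i \<noteq> i'"
      have "V i \<inter> V i' \<subseteq> (\<Inter>j\<in>J. V j)"
        using Jp[OF a] hyp JI by blast
      moreover have "(\<Inter>j\<in>J. V j) \<subseteq> V i \<inter> V i'" using a by blast
      ultimately show "V i \<inter> V i' = (\<Inter>j\<in>J. V j)" by blast
    qed
    then show ?thesis using True JI by blast
  next
    case False
    have "\<forall>i\<in>I. \<exists>j\<in>J. \<not> V i \<inter> V j \<subseteq> C"
    proof
      fix i assume iI: "i \<in> I"
      show "\<exists>j\<in>J. \<not> V i \<inter> V j \<subseteq> C"
      proof (cases "i \<in> J")
        case True
        then show ?thesis using hyp[OF iI] by (intro bexI[of _ i]) auto
      next
        case iJ: False
        show ?thesis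
        proof (rule ccontr)
          assume "\<not> ?thesis"
          then have all: "\<And>j. j \<in> J \<Longrightarrow> V i \<inter> V j = C" using hyp iI JI by blast
          have "insert i J \<in> F" unfolding F_def using JI iI Jp all
            by (auto simp: Int_commute)
          then have "card (insert i J) \<le> card J" by (rule Jmax)
          moreover have "card (insert i J) = Suc (card J)"
            using iJ finite_subset[OF JI fI] by simp
          ultimately show False by simp
        qed
      qed
    qed
    then show ?thesis using False JI by (intro disjI2) (auto simp: not_le)
  qed
qed

lemma complement_exists:
  fixes C W :: "('f::field ^ 'm) set"
  assumes "vec.subspace C" "vec.subspace W" "C \<subseteq> W"
  shows "\<exists>B. finite B \<and> card B = vec.dim W - vec.dim C \<and>
             (\<forall>w\<in>W. \<exists>a\<in>C. \<exists>b\<in>vec.span B. w = a + b)"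
proof -
  obtain B0 where B0: "B0 \<subseteq> C" "vec.independent B0" "C \<subseteq> vec.span B0" "card B0 = vec.dim C"
    by (rule vec.basis_exists)
  obtain B where B: "B0 \<subseteq> B" "B \<subseteq> W" "vec.independent B" "W \<subseteq> vec.span B"
    using vec.maximal_independent_subset_extend[of B0 W] B0 assms(3) by blast
  have cB: "card B = vec.dim W" using vec.basis_card_eq_dim B by blast
  have fB: "finite B" using B(3) vec.finiteI_independent by blast
  have "card (B - B0) = vec.dim W - vec.dim C"
    using cB B0(4) B(1) fB by (simp add: card_Diff_subset finite_subset)
  moreover have "\<forall>w\<in>W. \<exists>a\<in>C. \<exists>b\<in>vec.span (B - B0). w = a + b"
  proof
    fix w assume "w \<in> W"
    then have "w \<in> vec.span (B0 \<union> (B - B0))" using B(1,4) by (auto simp: Un_absorb1)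
    then obtain a b where "w = a + b" "a \<in> vec.span B0" "b \<in> vec.span (B - B0)"
      unfolding vec.span_Un by blast
    moreover have "vec.span B0 \<subseteq> C" using vec.span_minimal[OF B0(1) assms(1)] .
    ultimately show "\<exists>a\<in>C. \<exists>b\<in>vec.span (B - B0). w = a + b" by blast
  qed
  ultimately show ?thesis using fB by blast
qed

lemma exp_step:
  assumes "1 \<le> (k::nat)"
  shows "((Suc k)^2 + Suc k - 2) div 2 = (k^2 + k - 2) div 2 + Suc k"
proof -
  have "1 * 1 \<le> k * k" using mult_le_mono[OF assms assms] .
  then have h: "2 \<le> k * k + k" using assms by linarith
  define n where "n = k * k"
  have e: "Suc k * Suc k = n + 2*k + 1" unfolding n_def by simp
  have "(Suc k)^2 + Suc k - 2 = (k^2 + k - 2) + 2 * Suc k"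
    unfolding power2_eq_square e using h unfolding n_def[symmetric] by arith
  then show ?thesis by simp
qed

lemma main_gen:
  fixes V :: "'i \<Rightarrow> ('f::field ^ 'm) set" and p s :: nat
  assumes fin: "finite (UNIV :: 'f set)" and cp: "CARD('f) = p" and s1: "1 \<le> s"
  shows "1 \<le> k \<Longrightarrow> vec.subspace C \<Longrightarrow> finite I \<Longrightarrow>
    (\<forall>i\<in>I. vec.subspace (V i) \<and> C \<subseteq> V i \<and> vec.dim (V i) = vec.dim C + k) \<Longrightarrow>
    s ^ (k+1) * p ^ ((k^2+k-2) div 2) \<le> card I \<Longrightarrow> \<exists>J\<subseteq>I. card J \<ge> s \<and> sunflower J V"
proof (induction k arbitrary: C I)
  case 0
  then show ?case by simp
next
  case (Suc k)
  note sub = Suc.prems(2) and fI = Suc.prems(3) and Vh = Suc.prems(4) and cI = Suc.prems(5)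
  have "0 < CARD('f)" using fin by (simp add: card_gt_0_iff)
  then have p1: "1 \<le> p" using cp by simp
  have "1 \<le> s ^ (Suc k+1) * p ^ ((Suc k^2+Suc k-2) div 2)"
  proof -
    have "1 \<le> s ^ (Suc k+1)" using s1 by (rule one_le_power)
    moreover have "1 \<le> p ^ ((Suc k^2+Suc k-2) div 2)" using p1 by (rule one_le_power)
    ultimately show ?thesis using mult_le_mono by fastforce
  qed
  then have "1 \<le> card I" using cI by (rule le_trans)
  then have Ine: "I \<noteq> {}" by auto
  have neq: "\<And>i. i\<in>I \<Longrightarrow> C \<subseteq> V i \<and> V i \<noteq> C"
  proof -
    fix i assume "i \<in> I"
    then have h: "vec.subspace (V i) \<and> C \<subseteq> V i \<and> vec.dim (V i) = vec.dim C + Suc k"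
      using Vh by blast
    have "V i \<noteq> C"
    proof
      assume "V i = C"
      then show False using h by simp
    qed
    then show "C \<subseteq> V i \<and> V i \<noteq> C" using h by blast
  qed
  have spC: "vec.span C = C" using vec.span_subspace[OF order_refl vec.span_superset sub] .
  have dimins: "\<And>d. d \<notin> C \<Longrightarrow> vec.dim (vec.span (insert d C)) = vec.dim C + 1"
  proof -
    fix d assume "d \<notin> C"
    then have "d \<notin> vec.span C" unfolding spC .
    then show "vec.dim (vec.span (insert d C)) = vec.dim C + 1" by (simp add: vec.dim_insert)
  qed
  from max_family[OF fI neq, where s=s]
  show ?case
  proof
    assume "\<exists>J\<subseteq>I. card J \<ge> s \<and> sunflower J V" then show ?thesis .
  next
    assume "\<exists>J\<subseteq>I. card J < s \<and> (\<forall>i\<in>I. \<exists>j\<in>J. \<not> V i \<inter> V j \<subseteq> C)"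
    then obtain J where JI: "J \<subseteq> I" and cJ: "card J < s"
      and cov: "\<forall>i\<in>I. \<exists>j\<in>J. \<not> V i \<inter> V j \<subseteq> C" by blast
    have fJ: "finite J" using finite_subset[OF JI fI] .
    show ?thesis
    proof (cases "k = 0")
      case True
      have eqV: "\<And>i j. i \<in> I \<Longrightarrow> j \<in> J \<Longrightarrow> \<not> V i \<inter> V j \<subseteq> C \<Longrightarrow> V i = V j"
      proof -
        fix i j assume iI: "i \<in> I" and jJ: "j \<in> J" and nc: "\<not> V i \<inter> V j \<subseteq> C"
        then obtain d where d: "d \<in> V i" "d \<in> V j" "d \<notin> C" by blast
        have jI: "j \<in> I" using jJ JI by blast
        let ?C' = "vec.span (insert d C)"
        have dC: "vec.dim ?C' = vec.dim C + 1" using dimins[OF d(3)] .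
        have "?C' \<subseteq> V i" using Vh iI d(1) by (intro vec.span_minimal) auto
        then have 1: "?C' = V i" using Vh iI dC True
          by (intro vec.subspace_dim_equal) auto
        have "?C' \<subseteq> V j" using Vh jI d(2) by (intro vec.span_minimal) auto
        then have 2: "?C' = V j" using Vh jI dC True
          by (intro vec.subspace_dim_equal) auto
        show "V i = V j" using 1 2 by simp
      qed
      have "\<forall>i\<in>I. \<exists>j. j \<in> J \<and> \<not> V i \<inter> V j \<subseteq> C" using cov by blast
      then obtain L where L: "\<And>i. i \<in> I \<Longrightarrow> L i \<in> J \<and> \<not> V i \<inter> V (L i) \<subseteq> C"
        by metis
      have "card J * s \<le> card I"
      proof -
        have "card J * s \<le> s * s" using cJ by simp
        also have "\<dots> \<le> card I" using cI True by (simp add: power2_eq_square)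
        finally show ?thesis .
      qed
      then obtain j where jJ: "j \<in> J" and cG: "s \<le> card {i\<in>I. L i = j}"
        using pigeon[OF fJ _ _ Ine fI, of L s] L by blast
      let ?G = "{i\<in>I. L i = j}"
      have GV: "\<And>i. i \<in> ?G \<Longrightarrow> V i = V j" using eqV L by blast
      have Gne: "?G \<noteq> {}"
      proof
        assume "?G = {}"
        then have "card ?G = 0" by (simp only: card.empty)
        then show False using cG s1 by linarith
      qed
      have "sunflower ?G V" unfolding sunflower_def
      proof (intro ballI impI)
        fix i i' assume "i \<in> ?G" "i' \<in> ?G"
        then show "V i \<inter> V i' = (\<Inter>j\<in>?G. V j)" using GV Gne by auto
      qed
      then show ?thesis using cG by (intro exI[of _ ?G]) auto
    next
      case False
      then have k1: "1 \<le> k" by simp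
      have "\<forall>j\<in>J. \<exists>B. finite B \<and> card B = vec.dim (V j) - vec.dim C \<and>
             (\<forall>w\<in>V j. \<exists>a\<in>C. \<exists>b\<in>vec.span B. w = a + b)"
        using JI Vh sub by (intro ballI complement_exists) auto
      then obtain Bf where Bf: "\<And>j. j \<in> J \<Longrightarrow> finite (Bf j) \<and> card (Bf j) = vec.dim (V j) - vec.dim C \<and>
             (\<forall>w\<in>V j. \<exists>a\<in>C. \<exists>b\<in>vec.span (Bf j). w = a + b)"
        by metis
      define D where "D = (\<Union>j\<in>J. vec.span (Bf j))"
      have cBf: "\<And>j. j \<in> J \<Longrightarrow> card (Bf j) = Suc k" using Bf Vh JI by fastforce
      have fspan: "\<And>j. j \<in> J \<Longrightarrow> finite (vec.span (Bf j))"
        using finite_span_fin[OF fin] Bf by blast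
      have fD: "finite D" unfolding D_def using fJ fspan by auto
      have "card D \<le> (\<Sum>j\<in>J. card (vec.span (Bf j)))" unfolding D_def by (rule card_UN_le[OF fJ])
      also have "\<dots> \<le> (\<Sum>j\<in>J. p ^ Suc k)"
      proof (rule sum_mono)
        fix j assume jJ: "j \<in> J"
        have "card (vec.span (Bf j)) \<le> CARD('f) ^ card (Bf j)"
          using card_span_le[OF fin] Bf[OF jJ] by blast
        then show "card (vec.span (Bf j)) \<le> p ^ Suc k" using cBf[OF jJ] cp by simp
      qed
      also have "\<dots> = card J * p ^ Suc k" by simp
      finally have cD0: "card D \<le> card J * p ^ Suc k" .
      have "card J \<le> s - 1" using cJ by simp
      then have cD: "card D \<le> (s - 1) * p ^ Suc k"
        using cD0 by (meson le_trans mult_le_mono1)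
      have lab: "\<forall>i\<in>I. \<exists>d. d \<in> D \<and> d \<notin> C \<and> d \<in> V i"
      proof
        fix i assume iI: "i \<in> I"
        then obtain j where jJ: "j \<in> J" and nc: "\<not> V i \<inter> V j \<subseteq> C" using cov by blast
        then obtain w where w: "w \<in> V i" "w \<in> V j" "w \<notin> C" by blast
        obtain a b where ab: "a \<in> C" "b \<in> vec.span (Bf j)" "w = a + b" using Bf[OF jJ] w(2) by blast
        have "b = w - a" using ab by simp
        moreover have "a \<in> V i" using ab(1) Vh iI by blast
        ultimately have bV: "b \<in> V i" using w(1) Vh iI by (simp add: vec.subspace_diff)
        have "b \<notin> C" using ab w(3) sub vec.subspace_add by blast
        then show "\<exists>d. d \<in> D \<and> d \<notin> C \<and> d \<in> V i" using bV ab(2) jJ unfolding D_def by blast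
      qed
      define L where "L i = (SOME d. d \<in> D \<and> d \<notin> C \<and> d \<in> V i)" for i
      have L: "\<And>i. i \<in> I \<Longrightarrow> L i \<in> D \<and> L i \<notin> C \<and> L i \<in> V i"
      proof -
        fix i assume "i \<in> I"
        then have "\<exists>d. d \<in> D \<and> d \<notin> C \<and> d \<in> V i" using lab by blast
        then show "L i \<in> D \<and> L i \<notin> C \<and> L i \<in> V i" unfolding L_def by (rule someI_ex)
      qed
      define M where "M = s ^ (k+1) * p ^ ((k^2+k-2) div 2)"
      have "card D * M \<le> (s - 1) * p ^ Suc k * M" using cD by (rule mult_le_mono1)
      also have "\<dots> \<le> s * p ^ Suc k * M" by (intro mult_le_mono1) simp
      also have "\<dots> = s ^ (Suc k + 1) * p ^ ((Suc k^2+Suc k-2) div 2)"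
        unfolding M_def exp_step[OF k1] power_add by (simp only: power_Suc mult_ac)
      also have "\<dots> \<le> card I" using cI .
      finally have "card D * M \<le> card I" .
      then obtain d where dD: "d \<in> D" and cG: "M \<le> card {i\<in>I. L i = d}"
        using pigeon[OF fD _ _ Ine fI, of L M] L by blast
      let ?G = "{i\<in>I. L i = d}"
      let ?C' = "vec.span (insert d C)"
      have Gne: "?G \<noteq> {}"
      proof
        assume "?G = {}"
        then have "card ?G = 0" by (simp only: card.empty)
        then have "M = 0" using cG by linarith
        then show False using p1 s1 unfolding M_def by simp
      qed
      then obtain i0 where "i0 \<in> ?G" by blast
      then have dC: "d \<notin> C" using L by blast
      have "\<forall>i\<in>?G. vec.subspace (V i) \<and> ?C' \<subseteq> V i \<and> vec.dim (V i) = vec.dim ?C' + k"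
      proof
        fix i assume iG: "i \<in> ?G"
        then have "d \<in> V i" using L by blast
        then have "?C' \<subseteq> V i" using Vh iG by (intro vec.span_minimal) auto
        then show "vec.subspace (V i) \<and> ?C' \<subseteq> V i \<and> vec.dim (V i) = vec.dim ?C' + k"
          using Vh iG dimins[OF dC] by auto
      qed
      moreover have fG: "finite ?G" using fI by simp
      ultimately have "\<exists>J\<subseteq>?G. card J \<ge> s \<and> sunflower J V"
        using Suc.IH[OF k1 vec.subspace_span fG _ cG[unfolded M_def]] by blast
      then show ?thesis by blast
    qed
  qed
qed

theorem lemma3p20:
  fixes V :: "'i \<Rightarrow> ('f::field ^ 'm) set"
    and I :: "'i set" and p k s :: nat
  assumes "finite (UNIV :: 'f set)" and "CARD('f) = p" and "prime p"
    and "1 \<le> k" and "k < CARD('m)" and "1 \<le> s"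
    and "finite I"
    and "\<And>i. i \<in> I \<Longrightarrow> vec.subspace (V i) \<and> vec.dim (V i) = k"
    and "card I \<ge> s ^ (k + 1) * p ^ ((k^2 + k - 2) div 2)"
  shows "\<exists>J\<subseteq>I. card J \<ge> s \<and> sunflower J V"
proof -
  have d0: "vec.dim {0::'f^'m} = 0" by (metis vec.dim_span vec.dim_empty vec.span_empty)
  have "\<forall>i\<in>I. vec.subspace (V i) \<and> {0} \<subseteq> V i \<and> vec.dim (V i) = vec.dim {0::'f^'m} + k"
    using assms(8) vec.subspace_0 d0 by fastforce
  from main_gen[OF assms(1,2,6) assms(4) vec.subspace_single_0 assms(7) this] assms(9)
  show ?thesis by blast
qed

end
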